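(* Let $\mathcal{G}_L=(\mathcal{V}_L,\mathcal{E}_L)$ be a coloured graph obtained from complete graphs $G_1,\dots,G_L$ by the inductive construction described in the context, with vertex weights $w(v)$ and edge weights $w(e)$. Let $t>0$ and consider the hopping Hamiltonian $H_{\mathrm{hop}}=\sum_{v,v'\in\mathcal{V}_L}\sum_{\sigma=\uparrow,\downarrow}t_{v,v'}c_{v,\sigma}^\dagger c_{v',\sigma}$, where $t_{v,v'}=w(e)t$ if $e=\{v,v'\}\in\mathcal{E}_L$, $t_{v,v}=w(v)t$, and $t_{v,v'}=0$ otherwise. Then the lowest single-electron energy of $H_{\mathrm{hop}}$ is $0$, and this eigenvalue is $(|\mathcal{V}_L|-L)$-fold degenerate (per spin direction).
   Context: Construction. Let $G_l=(V_l,E_l)$, $l=1,\dots,L$, be complete graphs with $|V_l|\ge 2$ and $E_l=\{\{v,v'\}: v,v'\in V_l, v\neq v'\}$. In each $V_l$ one vertex $v_l^0$ is painted black, all other vertices of $V_l$ are painted white. Set $\mathcal{G}_1=G_1$ with this colouring. For $l=2,\dots,L$: choose an integer $z_l$ with $0<z_l\le |V_l|-1$, choose $z_l$ white vertices of $V_l$ and identify each of them with a vertex (black or white; distinct chosen vertices with distinct vertices) of $\mathcal{V}_{l-1}$; then $\mathcal{V}_l=\mathcal{V}_{l-1}\cup V_l$ with these identifications, $\mathcal{E}_l=\mathcal{E}_{l-1}\cup E_l$ where edges joining the same two vertices are merged into one edge. A white vertex identified with a black one becomes black; two identified white vertices stay white; the black vertex $v_l^0$ is never identified with an earlier vertex.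 Thus the black vertices of $\mathcal{G}_L$ are exactly $v_1^0,\dots,v_L^0$ and the set $\mathcal{V}_L^{W}$ of white vertices has $|\mathcal{V}_L|-L$ elements; the sets $V_l,E_l$ are regarded as subsets of $\mathcal{V}_L,\mathcal{E}_L$. The weight $w(v)$ of $v\in\mathcal{V}_L$ is the number of $l$ with $v\in V_l$; the weight $w(e)$ of $e\in\mathcal{E}_L$ is the number of $l$ with $e\in E_l$. Fermions: $c_{v,\sigma},c_{v,\sigma}^\dagger$ ($v\in\mathcal{V}_L$, $\sigma\in\{\uparrow,\downarrow\}$) satisfy the canonical anticommutation relations $\{c_{v,\sigma},c_{v',\tau}\}=0$, $\{c^\dagger_{v,\sigma},c_{v',\tau}\}=\delta_{v,v'}\delta_{\sigma,\tau}$. *)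

theory Defs
  imports "HOL-Analysis.Analysis"
begin

text \<open>The coloured graph is encoded by the family of vertex sets Vs l (l = 1..L) of the
  complete graphs G_l, viewed as subsets of the final vertex set (a finite type 'n), together
  with the black vertices b l = v_l^0.\<close>

definition cedges :: "'a set \<Rightarrow> 'a set set" where
  "cedges V = {{v, v'} | v v'. v \<in> V \<and> v' \<in> V \<and> v \<noteq> v'}"

definition graph_edges :: "nat \<Rightarrow> (nat \<Rightarrow> 'a set) \<Rightarrow> 'a set set" where
  "graph_edges L Vs = (\<Union>l\<in>{1..L}. cedges (Vs l))"

definition vweight :: "nat \<Rightarrow> (nat \<Rightarrow> 'a set) \<Rightarrow> 'a \<Rightarrow> nat" where
  "vweight L Vs v = card {l \<in> {1..L}. v \<in> Vs l}"

definition eweight :: "nat \<Rightarrow> (nat \<Rightarrow> 'a set) \<Rightarrow> 'a set \<Rightarrow> nat" where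
  "eweight L Vs e = card {l \<in> {1..L}. e \<in> cedges (Vs l)}"

text \<open>Result of the inductive construction: each V_l has at least two vertices and contains
  its black vertex v_l^0; for l >= 2, v_l^0 is new (not an earlier vertex) and
  z_l = |V_l \<inter> V_{l-1}-graph| > 0 (the identified vertices are then automatically white
  vertices of V_l, and z_l <= |V_l| - 1).\<close>

definition valid_construction :: "nat \<Rightarrow> (nat \<Rightarrow> 'a set) \<Rightarrow> (nat \<Rightarrow> 'a) \<Rightarrow> bool" where
  "valid_construction L Vs b \<longleftrightarrow>
     L \<ge> 1 \<and>
     (\<forall>l\<in>{1..L}. finite (Vs l) \<and> card (Vs l) \<ge> 2 \<and> b l \<in> Vs l) \<and>
     (\<forall>l\<in>{2..L}. b l \<notin> (\<Union>k\<in>{1..<l}. Vs k) \<and> Vs l \<inter> (\<Union>k\<in>{1..<l}. Vs k) \<noteq> {})"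

definition hop_matrix :: "nat \<Rightarrow> (nat \<Rightarrow> 'n::finite set) \<Rightarrow> real \<Rightarrow> real^'n^'n" where
  "hop_matrix L Vs t = (\<chi> v v'.
     if v = v' then real (vweight L Vs v) * t
     else if {v, v'} \<in> graph_edges L Vs then real (eweight L Vs {v, v'}) * t
     else 0)"

end

theory Submission imports Defs begin

definition ind :: "(nat \<Rightarrow> 'n set) \<Rightarrow> nat \<Rightarrow> 'n \<Rightarrow> 'a::comm_ring_1" where
  "ind Vs l i = (if i \<in> Vs l then 1 else 0)"

lemma cedges_mem: "i \<noteq> j \<Longrightarrow> {i, j} \<in> cedges V \<longleftrightarrow> i \<in> V \<and> j \<in> V"
  unfolding cedges_def by (auto simp: doubleton_eq_iff)

lemma H_entry:
  "hop_matrix L Vs t $ i $ j = t * (\<Sum>l\<in>{1..L}. ind Vs l i * ind Vs l j)"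
proof (cases "i = j")
  case True
  have "(\<Sum>l\<in>{1..L}. ind Vs l i * ind Vs l i :: real) = (\<Sum>l\<in>{1..L}. if i \<in> Vs l then 1 else 0)"
    by (rule sum.cong) (auto simp: ind_def)
  also have "\<dots> = real (card {l \<in> {1..L}. i \<in> Vs l})"
    by (simp add: sum.If_cases Int_def)
  finally show ?thesis using True by (simp add: hop_matrix_def vweight_def)
next
  case False
  have s: "(\<Sum>l\<in>{1..L}. ind Vs l i * ind Vs l j :: real) = real (card {l \<in> {1..L}. i \<in> Vs l \<and> j \<in> Vs l})"
  proof -
    have "(\<Sum>l\<in>{1..L}. ind Vs l i * ind Vs l j :: real) = (\<Sum>l\<in>{1..L}. if i \<in> Vs l \<and> j \<in> Vs l then 1 else 0)"
      by (rule sum.cong) (auto simp: ind_def)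
    also have "\<dots> = real (card {l \<in> {1..L}. i \<in> Vs l \<and> j \<in> Vs l})"
      by (simp add: sum.If_cases Int_def)
    finally show ?thesis .
  qed
  show ?thesis
  proof (cases "{i, j} \<in> graph_edges L Vs")
    case True
    then show ?thesis using False s
      by (simp add: hop_matrix_def eweight_def cedges_mem)
  next
    case F2: False
    hence "{l \<in> {1..L}. i \<in> Vs l \<and> j \<in> Vs l} = {}"
      using False by (auto simp: graph_edges_def cedges_mem)
    then show ?thesis using False F2 s by (simp add: hop_matrix_def)
  qed
qed

lemma quad:
  fixes f g :: "'n::finite \<Rightarrow> 'a::comm_ring_1"
  shows "(\<Sum>i\<in>UNIV. f i * (\<Sum>j\<in>UNIV. (\<Sum>l\<in>A. ind Vs l i * ind Vs l j) * g j))
     = (\<Sum>l\<in>A. (\<Sum>i\<in>UNIV. ind Vs l i * f i) * (\<Sum>j\<in>UNIV. ind Vs l j * g j))"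
proof -
  have "(\<Sum>i\<in>UNIV. f i * (\<Sum>j\<in>UNIV. (\<Sum>l\<in>A. ind Vs l i * ind Vs l j) * g j))
      = (\<Sum>i\<in>UNIV. \<Sum>j\<in>UNIV. \<Sum>l\<in>A. (ind Vs l i * f i) * (ind Vs l j * g j))"
    by (simp add: sum_distrib_left sum_distrib_right mult_ac)
  also have "\<dots> = (\<Sum>i\<in>UNIV. \<Sum>l\<in>A. \<Sum>j\<in>UNIV. (ind Vs l i * f i) * (ind Vs l j * g j))"
    by (subst sum.swap) (rule refl)
  also have "\<dots> = (\<Sum>l\<in>A. \<Sum>i\<in>UNIV. \<Sum>j\<in>UNIV. (ind Vs l i * f i) * (ind Vs l j * g j))"
    by (rule sum.swap)
  also have "\<dots> = (\<Sum>l\<in>A. (\<Sum>i\<in>UNIV. ind Vs l i * f i) * (\<Sum>j\<in>UNIV. ind Vs l j * g j))"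
    by (simp add: sum_product)
  finally show ?thesis .
qed

lemma lin:
  fixes g :: "'n::finite \<Rightarrow> 'a::comm_ring_1"
  shows "(\<Sum>j\<in>UNIV. (\<Sum>l\<in>A. ind Vs l i * ind Vs l j) * g j)
     = (\<Sum>l\<in>A. ind Vs l i * (\<Sum>j\<in>UNIV. ind Vs l j * g j))"
  by (simp add: sum_distrib_left sum_distrib_right mult_ac) (rule sum.swap)

definition avec :: "(nat \<Rightarrow> 'n::finite set) \<Rightarrow> nat \<Rightarrow> real^'n" where
  "avec Vs l = (\<chi> i. ind Vs l i)"

lemma avec_inner: "avec Vs l \<bullet> x = (\<Sum>j\<in>UNIV. ind Vs l j * x $ j)"
  by (simp add: avec_def inner_vec_def)

lemma Hv: "(hop_matrix L Vs t *v x) $ i = t * (\<Sum>l\<in>{1..L}. ind Vs l i * (avec Vs l \<bullet> x))"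
proof -
  have "(hop_matrix L Vs t *v x) $ i = (\<Sum>j\<in>UNIV. (t * (\<Sum>l\<in>{1..L}. ind Vs l i * ind Vs l j)) * x $ j)"
    by (simp add: matrix_vector_mult_def H_entry)
  also have "\<dots> = t * (\<Sum>j\<in>UNIV. (\<Sum>l\<in>{1..L}. ind Vs l i * ind Vs l j) * x $ j)"
    by (simp add: mult.assoc flip: sum_distrib_left)
  also have "\<dots> = t * (\<Sum>l\<in>{1..L}. ind Vs l i * (avec Vs l \<bullet> x))"
    by (simp add: lin avec_inner)
  finally show ?thesis .
qed

lemma quadr: "x \<bullet> (hop_matrix L Vs t *v x) = t * (\<Sum>l\<in>{1..L}. (avec Vs l \<bullet> x)^2)"
proof -
  have "x \<bullet> (hop_matrix L Vs t *v x) = (\<Sum>i\<in>UNIV. x $ i * (t * (\<Sum>j\<in>UNIV. (\<Sum>l\<in>{1..L}. ind Vs l i * ind Vs l j) * x $ j)))"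
    by (simp add: inner_vec_def matrix_vector_mult_def H_entry mult.assoc flip: sum_distrib_left)
  also have "\<dots> = t * (\<Sum>i\<in>UNIV. x $ i * (\<Sum>j\<in>UNIV. (\<Sum>l\<in>{1..L}. ind Vs l i * ind Vs l j) * x $ j))"
    by (simp add: sum_distrib_left mult_ac)
  also have "\<dots> = t * (\<Sum>l\<in>{1..L}. (avec Vs l \<bullet> x)^2)"
    by (subst quad) (simp add: avec_inner power2_eq_square)
  finally show ?thesis .
qed

lemma kernel_eq:
  assumes "t > 0"
  shows "{x. hop_matrix L Vs t *v x = 0} = {x. \<forall>l\<in>{1..L}. avec Vs l \<bullet> x = 0}"
proof safe
  fix x l assume x: "hop_matrix L Vs t *v x = 0" and l: "l \<in> {1..L}"
  have "t * (\<Sum>l\<in>{1..L}. (avec Vs l \<bullet> x)^2) = 0"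
    using quadr[of x L Vs t] x by simp
  hence "(\<Sum>l\<in>{1..L}. (avec Vs l \<bullet> x)^2) = 0" using assms by simp
  hence "\<forall>l\<in>{1..L}. (avec Vs l \<bullet> x)^2 = 0"
    by (subst sum_nonneg_eq_0_iff[symmetric]) auto
  thus "avec Vs l \<bullet> x = 0" using l by simp
next
  fix x assume "\<forall>l\<in>{1..L}. avec Vs l \<bullet> x = 0"
  thus "hop_matrix L Vs t *v x = 0"
    by (simp add: vec_eq_iff Hv)
qed

lemma span_zero_coord:
  assumes "y \<in> span (avec Vs ` K)" and "\<forall>k\<in>K. p \<notin> Vs k"
  shows "y $ p = 0"
proof -
  have "subspace {y::real^'a. y $ p = 0}" by (simp add: subspace_def)
  moreover have "\<And>z. z \<in> avec Vs ` K \<Longrightarrow> z $ p = 0"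
    using assms(2) by (auto simp: avec_def ind_def)
  ultimately show ?thesis using span_induct[OF assms(1), of "\<lambda>y. y $ p = 0"] by simp
qed

lemma indep:
  assumes vc: "valid_construction L Vs b"
  shows "l \<le> L \<Longrightarrow> independent (avec Vs ` {1..l}) \<and> card (avec Vs ` {1..l}) = l"
proof (induction l)
  case 0
  then show ?case by (simp add: independent_empty)
next
  case (Suc l)
  have bin: "b (Suc l) \<in> Vs (Suc l)" using vc Suc.prems by (simp add: valid_construction_def)
  have bout: "\<forall>k\<in>{1..l}. b (Suc l) \<notin> Vs k"
  proof (cases l)
    case 0 then show ?thesis by simp
  next
    case (Suc m)
    then show ?thesis using vc \<open>Suc l \<le> L\<close> by (auto simp: valid_construction_def)
  qed
  have nin: "avec Vs (Suc l) \<notin> span (avec Vs ` {1..l})"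
  proof
    assume "avec Vs (Suc l) \<in> span (avec Vs ` {1..l})"
    from span_zero_coord[OF this bout] bin show False by (simp add: avec_def ind_def)
  qed
  hence nin2: "avec Vs (Suc l) \<notin> avec Vs ` {1..l}" using span_base by blast
  have eq: "avec Vs ` {1..Suc l} = insert (avec Vs (Suc l)) (avec Vs ` {1..l})"
    by (simp add: atLeastAtMostSuc_conv)
  show ?case using Suc nin nin2 unfolding eq by (simp add: independent_insert)
qed

lemma card_gt:
  assumes vc: "valid_construction L Vs b" and cov: "(\<Union>l\<in>{1..L}. Vs l) = (UNIV :: 'n::finite set)"
  shows "L < CARD('n)"
proof -
  have L1: "L \<ge> 1" and V1: "finite (Vs 1)" "card (Vs 1) \<ge> 2" "b 1 \<in> Vs 1"
    using vc by (auto simp: valid_construction_def)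
  obtain v where v: "v \<in> Vs 1" "v \<noteq> b 1"
  proof -
    have "Vs 1 - {b 1} \<noteq> {}"
    proof
      assume "Vs 1 - {b 1} = {}"
      hence "Vs 1 \<subseteq> {b 1}" by blast
      hence "card (Vs 1) \<le> 1" using card_mono[of "{b 1}" "Vs 1"] by simp
      thus False using V1 by simp
    qed
    thus ?thesis using that by blast
  qed
  have bdiff: "\<And>k l. 1 \<le> k \<Longrightarrow> k < l \<Longrightarrow> l \<le> L \<Longrightarrow> b l \<notin> Vs k"
    using vc by (auto simp: valid_construction_def)
  have bin: "\<And>k. 1 \<le> k \<Longrightarrow> k \<le> L \<Longrightarrow> b k \<in> Vs k"
    using vc by (auto simp: valid_construction_def)
  define f where "f l = (if l = 0 then v else b l)" for l
  have "inj_on f {0..L}"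
  proof (rule inj_onI)
    fix k l assume k: "k \<in> {0..L}" and l: "l \<in> {0..L}" and e: "f k = f l"
    show "k = l"
    proof (rule ccontr)
      assume "k \<noteq> l"
      then consider "k < l" | "l < k" by linarith
      then show False
      proof cases
        case 1
        show False
        proof (cases "k = 0")
          case True
          then show ?thesis using e 1 l v bdiff[of 1 l] by (cases "l = 1") (auto simp: f_def)
        next
          case False
          then show ?thesis using e 1 k l bdiff[of k l] bin[of k] by (auto simp: f_def)
        qed
      next
        case 2
        show False
        proof (cases "l = 0")
          case True
          then show ?thesis using e 2 k v bdiff[of 1 k] by (cases "k = 1") (auto simp: f_def)
        next
          case False
          then show ?thesis using e 2 k l bdiff[of l k] bin[of l] by (auto simp: f_def)
        qed
      qed
    qed
  qed
  hence "card {0..L} \<le> CARD('n)" using card_inj_on_le[of f "{0..L}" UNIV] by simp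
  thus ?thesis by simp
qed

lemma of_real_ind: "complex_of_real (ind Vs l i) = ind Vs l i"
  by (simp add: ind_def)

lemma cnj_ind: "cnj (ind Vs l i) = ind Vs l i"
  by (simp add: ind_def)

lemma eigen:
  fixes x :: "complex^'n::finite"
  assumes t: "t > 0" and x0: "x \<noteq> 0"
    and ev: "(\<chi> i j. complex_of_real (hop_matrix L Vs t $ i $ j)) *v x = mu *s x"
  shows "mu \<in> \<real> \<and> 0 \<le> Re mu"
proof -
  let ?C = "(\<chi> i j. complex_of_real (hop_matrix L Vs t $ i $ j)) :: complex^'n^'n"
  define s where "s l = (\<Sum>j\<in>UNIV. ind Vs l j * x $ j)" for l
  define R where "R = t * (\<Sum>l\<in>{1..L}. (cmod (s l))^2)"
  define N where "N = (\<Sum>i\<in>UNIV. (cmod (x $ i))^2)"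
  have Ci: "(?C *v x) $ i = (\<Sum>j\<in>UNIV. (of_real t * (\<Sum>l\<in>{1..L}. ind Vs l i * ind Vs l j)) * x $ j)" for i
    by (simp add: matrix_vector_mult_def H_entry of_real_ind)
  have "(\<Sum>i\<in>UNIV. cnj (x $ i) * (?C *v x) $ i)
      = of_real t * (\<Sum>i\<in>UNIV. cnj (x $ i) * (\<Sum>j\<in>UNIV. (\<Sum>l\<in>{1..L}. ind Vs l i * ind Vs l j) * x $ j))"
    unfolding Ci by (simp add: mult.assoc mult.left_commute[of _ "of_real t"] flip: sum_distrib_left)
  also have "\<dots> = of_real t * (\<Sum>l\<in>{1..L}. (\<Sum>i\<in>UNIV. ind Vs l i * cnj (x $ i)) * s l)"
    by (subst quad) (simp add: s_def)
  also have "\<dots> = of_real t * (\<Sum>l\<in>{1..L}. cnj (s l) * s l)"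
    by (simp add: s_def cnj_ind)
  also have "\<dots> = of_real t * (\<Sum>l\<in>{1..L}. complex_of_real ((cmod (s l))^2))"
  proof -
    have "cnj (s l) * s l = complex_of_real ((cmod (s l))^2)" for l
      by (subst complex_norm_square) (simp add: mult.commute)
    thus ?thesis by simp
  qed
  also have "\<dots> = of_real R"
    by (simp add: R_def)
  finally have L1: "(\<Sum>i\<in>UNIV. cnj (x $ i) * (?C *v x) $ i) = of_real R" .
  have "(\<Sum>i\<in>UNIV. cnj (x $ i) * (?C *v x) $ i) = (\<Sum>i\<in>UNIV. mu * (cnj (x $ i) * x $ i))"
    using ev by (simp add: mult_ac)
  also have "\<dots> = mu * of_real N"
  proof -
    have "cnj (x $ i) * x $ i = complex_of_real ((cmod (x $ i))^2)" for i
      by (subst complex_norm_square) (simp add: mult.commute)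
    thus ?thesis by (simp add: N_def sum_distrib_left)
  qed
  finally have L2: "mu * of_real N = of_real R" using L1 by simp
  obtain i where "x $ i \<noteq> 0" using x0 by (auto simp: vec_eq_iff)
  hence Npos: "N > 0" unfolding N_def
    by (intro sum_pos2[of UNIV i]) auto
  have Rnn: "R \<ge> 0" unfolding R_def using t by (simp add: sum_nonneg)
  have "mu = of_real (R / N)" using L2 Npos by (simp add: field_simps)
  thus ?thesis using Rnn Npos by simp
qed

theorem proposition1:
  fixes Vs :: "nat \<Rightarrow> 'n::finite set" and b :: "nat \<Rightarrow> 'n" and L :: nat and t :: real
  assumes "valid_construction L Vs b"
    and "(\<Union>l\<in>{1..L}. Vs l) = UNIV"
    and "t > 0"
  shows "(\<exists>x. x \<noteq> 0 \<and> hop_matrix L Vs t *v x = 0)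
    \<and> (\<forall>(mu::complex) (x::complex^'n). x \<noteq> 0 \<and>
          (\<chi> i j. complex_of_real (hop_matrix L Vs t $ i $ j)) *v x = mu *s x
          \<longrightarrow> mu \<in> \<real> \<and> 0 \<le> Re mu)
    \<and> dim {x. hop_matrix L Vs t *v x = 0} = CARD('n) - L"
proof -
  let ?A = "avec Vs ` {1..L}"
  have ker: "{x. hop_matrix L Vs t *v x = 0} = {y \<in> UNIV. \<forall>z\<in>span ?A. orthogonal z y}"
    unfolding kernel_eq[OF assms(3)]
  proof safe
    fix y z assume y: "\<forall>l\<in>{1..L}. avec Vs l \<bullet> y = 0" and z: "z \<in> span ?A"
    have "orthogonal y z"
      by (rule orthogonal_to_span[OF z]) (use y in \<open>auto simp: orthogonal_def inner_commute\<close>)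
    thus "orthogonal z y" by (simp add: orthogonal_commute)
  next
    fix y l assume "\<forall>z\<in>span ?A. orthogonal z y" and "l \<in> {1..L}"
    hence "orthogonal (avec Vs l) y" using span_base[of "avec Vs l" ?A] by auto
    thus "avec Vs l \<bullet> y = 0" by (simp add: orthogonal_def)
  qed simp
  have dimsp: "dim (span ?A) = L"
    using indep[OF assms(1), of L] by (simp add: dim_eq_card_independent)
  have D: "dim {x. hop_matrix L Vs t *v x = 0} = CARD('n) - L"
    using dim_subspace_orthogonal_to_vectors[OF subspace_span subspace_UNIV subset_UNIV, of ?A]
    unfolding ker dimsp by simp
  have E: "\<exists>x. x \<noteq> 0 \<and> hop_matrix L Vs t *v x = 0"
  proof (rule ccontr)
    assume "\<not> ?thesis"
    hence "{x. hop_matrix L Vs t *v x = 0} \<subseteq> {0}" by auto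
    hence "dim {x. hop_matrix L Vs t *v x = 0} = 0" by simp
    thus False using D card_gt[OF assms(1,2)] by simp
  qed
  show ?thesis using E D eigen[OF assms(3)] by blast
qed

end
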